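(* Let $n\ge2$ and let $\xi_n:S^1\to M_n(\mathbb C)$ be given by $\xi_n(z)_{ij}=z^{j-i}$ ($1\le i,j\le n$). Then $\xi_n$ is entangled in $C(S^1)^{(n)}\otimes_{\min}C(S^1)_{(n)}$: it is positive there, but there do not exist $k\in\mathbb N$, positive semidefinite Toeplitz matrices $t_1,\dots,t_k\in C(S^1)^{(n)}$ and functions $f_1,\dots,f_k\in C(S^1)_{(n)}$ with $f_j(z)\ge0$ for all $z$, such that $\xi_n=\sum_{j=1}^k t_j\otimes f_j$.
   Context: $C(S^1)^{(n)}\subseteq M_n(\mathbb C)$ is the space of Toeplitz matrices $[\tau_{k-\ell}]$. $C(S^1)_{(n)}$ is the operator system of continuous functions $f$ on the unit circle $S^1$ with Fourier coefficients $\hat f(k)=0$ for $|k|\ge n$, positivity being pointwise. $C(S^1)^{(n)}\otimes_{\min}C(S^1)_{(n)}$ is identified with continuous functions $F:S^1\to C(S^1)^{(n)}$ with entries in $C(S^1)_{(n)}$ (via $t\otimes f\leftrightarrow z\mapsto f(z)t$), positive iff $F(z)$ is positive semidefinite for each $z$. *)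

theory Defs
  imports "HOL-Analysis.Analysis"
begin

text \<open>n x n complex matrices are represented as functions nat => nat => complex,
  with indices 0..n-1 (the paper uses 1..n; only differences of indices matter).\<close>

definition psd_mat :: "nat \<Rightarrow> (nat \<Rightarrow> nat \<Rightarrow> complex) \<Rightarrow> bool" where
  "psd_mat n A \<longleftrightarrow> (\<forall>v :: nat \<Rightarrow> complex.
      let q = (\<Sum>i<n. \<Sum>j<n. cnj (v i) * A i j * v j) in Im q = 0 \<and> Re q \<ge> 0)"

definition toeplitz_mat :: "nat \<Rightarrow> (nat \<Rightarrow> nat \<Rightarrow> complex) \<Rightarrow> bool" where
  "toeplitz_mat n A \<longleftrightarrow> (\<exists>\<tau> :: int \<Rightarrow> complex. \<forall>k<n. \<forall>l<n. A k l = \<tau> (int k - int l))"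

definition fourier_coeff :: "(complex \<Rightarrow> complex) \<Rightarrow> int \<Rightarrow> complex" where
  "fourier_coeff f k = integral {0..2*pi} (\<lambda>\<theta>. f (cis \<theta>) * cis (- of_int k * \<theta>)) / (2 * pi)"

definition trig_sys :: "nat \<Rightarrow> (complex \<Rightarrow> complex) set" where
  "trig_sys n = {f. continuous_on (sphere 0 1) f \<and> (\<forall>k. \<bar>k\<bar> \<ge> int n \<longrightarrow> fourier_coeff f k = 0)}"

definition xi :: "complex \<Rightarrow> nat \<Rightarrow> nat \<Rightarrow> complex" where
  "xi z i j = z powi (int j - int i)"

end

theory Submission
  imports Defs "HOL-Computational_Algebra.Polynomial"
begin

lemma sphere_infinite: "infinite (sphere (0::complex) 1)"
proof
  assume fin: "finite (sphere (0::complex) 1)"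
  let ?f = "\<lambda>x. Complex x (sqrt (1 - x^2))"
  have "?f ` {-1..1::real} \<subseteq> sphere 0 1"
  proof
    fix y assume "y \<in> ?f ` {-1..1::real}"
    then obtain x where x: "x \<in> {-1..1}" "y = ?f x" by auto
    have "x^2 \<le> 1" using x by (auto simp: abs_square_le_1)
    then show "y \<in> sphere 0 1" using x by (simp add: cmod_def)
  qed
  moreover have "inj_on ?f {-1..1}" by (auto simp: inj_on_def)
  ultimately have "finite {-1..1::real}"
    using fin finite_subset finite_image_iff by metis
  then show False using infinite_Icc[of "-1::real" 1] by simp
qed

lemma sum_two:
  fixes m n :: nat
  assumes "m \<noteq> 0" "m < n" "\<And>i. i \<noteq> 0 \<Longrightarrow> i \<noteq> m \<Longrightarrow> h i = (0::'a::comm_monoid_add)"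
  shows "(\<Sum>i<n. h i) = h 0 + h m"
proof -
  have "(\<Sum>i<n. h i) = (\<Sum>i\<in>{0,m}. h i)"
    apply (rule sum.mono_neutral_right)
    using assms by auto
  also have "\<dots> = h 0 + h m" using assms(1) by simp
  finally show ?thesis .
qed

lemma unit_inv: "cmod z = 1 \<Longrightarrow> z * cnj z = 1"
  using complex_norm_square[of z] by simp

lemma quad_two:
  fixes A :: "nat \<Rightarrow> nat \<Rightarrow> complex"
  assumes "m \<noteq> 0" "m < n"
  shows "(\<Sum>i<n. \<Sum>j<n. cnj ((\<lambda>i. if i = 0 then 1 else if i = m then - cnj w else 0) i) * A i j
           * (\<lambda>i. if i = 0 then 1 else if i = m then - cnj w else 0) j)
       = A 0 0 - A 0 m * cnj w - w * A m 0 + w * cnj w * A m m"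
  using assms by (simp add: sum_two[OF assms] algebra_simps)

lemma xi_entry: "cmod z = 1 \<Longrightarrow> xi z i j = cnj z ^ i * z ^ j"
proof -
  assume z: "cmod z = 1"
  then have z0: "z \<noteq> 0" by auto
  have inv: "inverse z = cnj z" using unit_inv[OF z] z0 by (simp add: inverse_unique)
  have "xi z i j = z ^ j / z ^ i" unfolding xi_def using z0 by (simp add: power_int_diff)
  also have "\<dots> = cnj z ^ i * z ^ j"
    by (metis divide_inverse inv mult.commute power_inverse)
  finally show ?thesis .
qed

lemma xi_psd: "cmod z = 1 \<Longrightarrow> psd_mat n (xi z)"
proof -
  assume z: "cmod z = 1"
  show ?thesis unfolding psd_mat_def Let_def
  proof
    fix v :: "nat \<Rightarrow> complex"
    define S where "S = (\<Sum>j<n. v j * z ^ j)"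
    have "(\<Sum>i<n. \<Sum>j<n. cnj (v i) * xi z i j * v j) = (\<Sum>i<n. \<Sum>j<n. cnj (v i * z ^ i) * (v j * z ^ j))"
      by (simp add: xi_entry[OF z] mult_ac)
    also have "\<dots> = cnj S * S" by (simp add: S_def sum_product)
    also have "\<dots> = of_real ((cmod S)^2)" using complex_norm_square[of S] by (simp add: mult.commute)
    finally show "Im (\<Sum>i<n. \<Sum>j<n. cnj (v i) * xi z i j * v j) = 0 \<and> 0 \<le> Re (\<Sum>i<n. \<Sum>j<n. cnj (v i) * xi z i j * v j)"
      by simp
  qed
qed

theorem corollary7p7:
  fixes n :: nat
  assumes "n \<ge> 2"
  shows "(\<forall>z\<in>sphere (0::complex) 1. psd_mat n (xi z)) \<and>
    \<not> (\<exists>(k::nat) (t :: nat \<Rightarrow> nat \<Rightarrow> nat \<Rightarrow> complex) (f :: nat \<Rightarrow> complex \<Rightarrow> complex).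
          (\<forall>j<k. toeplitz_mat n (t j) \<and> psd_mat n (t j) \<and> f j \<in> trig_sys n \<and>
                 (\<forall>z\<in>sphere 0 1. Im (f j z) = 0 \<and> Re (f j z) \<ge> 0)) \<and>
          (\<forall>z\<in>sphere 0 1. \<forall>a<n. \<forall>b<n. xi z a b = (\<Sum>j<k. f j z * t j a b)))"
proof
  show "\<forall>z\<in>sphere (0::complex) 1. psd_mat n (xi z)" using xi_psd by simp
next
  show "\<not> (\<exists>(k::nat) (t :: nat \<Rightarrow> nat \<Rightarrow> nat \<Rightarrow> complex) (f :: nat \<Rightarrow> complex \<Rightarrow> complex).
          (\<forall>j<k. toeplitz_mat n (t j) \<and> psd_mat n (t j) \<and> f j \<in> trig_sys n \<and>
                 (\<forall>z\<in>sphere 0 1. Im (f j z) = 0 \<and> Re (f j z) \<ge> 0)) \<and>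
          (\<forall>z\<in>sphere 0 1. \<forall>a<n. \<forall>b<n. xi z a b = (\<Sum>j<k. f j z * t j a b)))"
  proof
    assume "\<exists>(k::nat) (t :: nat \<Rightarrow> nat \<Rightarrow> nat \<Rightarrow> complex) (f :: nat \<Rightarrow> complex \<Rightarrow> complex).
          (\<forall>j<k. toeplitz_mat n (t j) \<and> psd_mat n (t j) \<and> f j \<in> trig_sys n \<and>
                 (\<forall>z\<in>sphere 0 1. Im (f j z) = 0 \<and> Re (f j z) \<ge> 0)) \<and>
          (\<forall>z\<in>sphere 0 1. \<forall>a<n. \<forall>b<n. xi z a b = (\<Sum>j<k. f j z * t j a b))"
    then obtain k :: nat and t :: "nat \<Rightarrow> nat \<Rightarrow> nat \<Rightarrow> complex" and f :: "nat \<Rightarrow> complex \<Rightarrow> complex" where H: "\<And>j. j<k \<Longrightarrow> toeplitz_mat n (t j) \<and> psd_mat n (t j) \<and>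
                 (\<forall>z\<in>sphere (0::complex) 1. Im (f j z) = 0 \<and> Re (f j z) \<ge> 0)"
      and D: "\<And>z a b. z\<in>sphere 0 1 \<Longrightarrow> a<n \<Longrightarrow> b<n \<Longrightarrow> xi z a b = (\<Sum>j<k. f j z * t j a b)"
      by blast
    define m where "m = n - 1"
    have m0: "m \<noteq> 0" and mn: "m < n" using assms by (auto simp: m_def)
    have tmm: "t j m m = t j 0 0" if "j < k" for j
    proof -
      from H[OF that] obtain \<tau> where "\<forall>a<n. \<forall>b<n. t j a b = \<tau> (int a - int b)"
        unfolding toeplitz_mat_def by blast
      then show ?thesis using mn by simp
    qed
    define p where "p j = monom (- t j m 0) (2*m) + monom (2 * t j 0 0) m + monom (- t j 0 m) 0" for j
    have p0: "t j 0 0 = 0" if "p j = 0" for j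
    proof -
      have "coeff (p j) m = 0" using that by simp
      then show ?thesis using m0 by (simp add: p_def)
    qed
    define R where "R = (\<Union>j\<in>{j. j<k \<and> p j \<noteq> 0}. {x. poly (p j) x = 0})"
    have "finite R" unfolding R_def using poly_roots_finite by auto
    then obtain z where z: "z \<in> sphere 0 1" "z \<notin> R"
      using sphere_infinite by (metis Diff_iff finite_subset subsetI)
    define w where "w = z ^ m"
    have zn: "cmod z = 1" using z by simp
    have wn: "cmod w = 1" using zn by (simp add: w_def norm_power)
    have ww: "w * cnj w = 1" using unit_inv[OF wn] .
    define v where "v = (\<lambda>i::nat. if i = 0 then 1 else if i = m then - cnj w else (0::complex))"
    define Q where "Q j = t j 0 0 - t j 0 m * cnj w - w * t j m 0 + w * cnj w * t j m m" for j
    have x00: "xi z 0 0 = 1" and x0m: "xi z 0 m = w" and xm0: "xi z m 0 = cnj w" and xmm: "xi z m m = 1"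
      using zn unit_inv[OF zn] by (simp_all add: xi_entry w_def power_mult_distrib[symmetric] mult.commute)
    have "0 = xi z 0 0 - xi z 0 m * cnj w - w * xi z m 0 + w * cnj w * xi z m m"
      using ww by (simp add: x00 x0m xm0 xmm)
    also have "\<dots> = (\<Sum>j<k. f j z * Q j)"
      using z mn by (simp add: D Q_def sum_distrib_left sum_distrib_right sum_subtractf sum.distrib algebra_simps)
    finally have sum0: "(\<Sum>j<k. f j z * Q j) = 0" by simp
    have Qpsd: "Im (Q j) = 0 \<and> Re (Q j) \<ge> 0" if "j < k" for j
    proof -
      have "psd_mat n (t j)" using H[OF that] by blast
      then have "Im (\<Sum>i<n. \<Sum>l<n. cnj (v i) * t j i l * v l) = 0 \<and> Re (\<Sum>i<n. \<Sum>l<n. cnj (v i) * t j i l * v l) \<ge> 0"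
        unfolding psd_mat_def Let_def by blast
      moreover have "(\<Sum>i<n. \<Sum>l<n. cnj (v i) * t j i l * v l) = Q j"
        unfolding v_def Q_def by (rule quad_two[OF m0 mn])
      ultimately show ?thesis by simp
    qed
    have fz: "Im (f j z) = 0 \<and> Re (f j z) \<ge> 0" if "j < k" for j using H[OF that] z(1) by blast
    have terms: "Re (f j z) * Re (Q j) = 0" if "j < k" for j
    proof -
      have "(\<Sum>j<k. Re (f j z) * Re (Q j)) = Re (\<Sum>j<k. f j z * Q j)"
        using fz by (simp add: Re_sum)
      also have "\<dots> = 0" using sum0 by simp
      finally have "(\<Sum>j<k. Re (f j z) * Re (Q j)) = 0" .
      moreover have "\<forall>j\<in>{..<k}. Re (f j z) * Re (Q j) \<ge> 0" using fz Qpsd by simp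
      ultimately have "\<forall>j\<in>{..<k}. Re (f j z) * Re (Q j) = 0"
        by (subst (asm) sum_nonneg_eq_0_iff) auto
      then show ?thesis using that by blast
    qed
    have fd: "f j z * t j 0 0 = 0" if "j < k" for j
    proof (cases "f j z = 0")
      case True then show ?thesis by simp
    next
      case False
      then have "Re (f j z) \<noteq> 0" using fz[OF that] complex_eq_iff by auto
      then have "Re (Q j) = 0" using terms[OF that] by simp
      then have "Q j = 0" using Qpsd[OF that] complex_eq_iff by auto
      then have "w * Q j = 0" by simp
      moreover have "w * Q j = poly (p j) z"
      proof -
        have z2: "z^(2*m) = w^2" "z^(m*2) = w^2" by (simp_all add: w_def power_mult[symmetric] mult.commute)
        have "w * Q j = w * t j 0 0 - t j 0 m * (w * cnj w) - t j m 0 * w^2 + (w * cnj w) * (w * t j 0 0)"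
          unfolding Q_def tmm[OF that] by (simp add: algebra_simps power2_eq_square)
        also have "\<dots> = w * t j 0 0 - t j 0 m - t j m 0 * w^2 + w * t j 0 0"
          by (simp only: ww mult_1_left mult_1_right)
        also have "\<dots> = poly (p j) z"
          by (simp add: p_def poly_monom z2 w_def[symmetric] algebra_simps)
        finally show ?thesis .
      qed
      ultimately have "poly (p j) z = 0" by simp
      then have "p j = 0" using z(2) that unfolding R_def by auto
      then show ?thesis using p0 by simp
    qed
    have "1 = xi z 0 0" using x00 by simp
    also have "\<dots> = (\<Sum>j<k. f j z * t j 0 0)" using D z mn by simp
    also have "\<dots> = 0" using fd by (intro sum.neutral) blast
    finally show False by simp
  qed
qed

end
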